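(* Let $p(x)=x^n+p_{n-1}x^{n-1}+\cdots+p_0\in\mathcal{O}[x]$ and let $(p,\mathcal{D})$ be a GNS over $\mathcal{O}$ with associated fundamental domain $\mathcal{F}$. Set $p_n=1$, $\Delta=\mathcal{N}\cdot\boldsymbol{\omega}$ and $Z=\{\sum_{j=1}^n\delta_jp_j:\delta_j\in\Delta\}$. Assume (i) $Z+\mathcal{D}\subset\mathcal{D}+p_0\Delta$; (ii) $Z\subset\mathcal{D}\cup(\mathcal{D}-p_0)$; (iii) $\{\sum_{j\in J}p_j: J\subseteq\{1,\ldots,n\}\}\subseteq\mathcal{D}$. Then $(p,\mathcal{D})$ has the finiteness property.
   Context: $\mathbb{K}$ is a number field of degree $k$, $\mathcal{O}$ an order in $\mathbb{K}$ with $\mathbb{Z}$-basis $\omega_1=1,\ldots,\omega_k$, $\boldsymbol{\omega}=(\omega_1,\ldots,\omega_k)$. A GNS over $\mathcal{O}$ is a pair $(p,\mathcal{D})$ with $p\in\mathcal{O}[x]$ monic and $\mathcal{D}\subset\mathcal{O}$ a complete residue system modulo $p(0)$ containing $0$; it has the finiteness property if every $a\in\mathcal{O}[x]$ satisfies $a\equiv\sum_{j=0}^{\ell-1}d_jx^j\pmod p$ for some $\ell\in\mathbb{N}$, $d_j\in\mathcal{D}$. A fundamental domain associated with $(p,\mathcal{D})$ is a bounded set $\mathcal{F}\subset\mathbb{R}^k$ with $\mathbb{R}^k=\mathcal{F}+\mathbb{Z}^k$ disjointly and $\mathcal{D}=\{p(0)\sum_j f_j\omega_j:(f_1,\ldots,f_k)\in\mathcal{F}\}\cap\mathcal{O}$.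 $\mathcal{N}=\{\mathbf{z}\in\mathbb{Z}^k:\overline{\mathcal{F}}\cap(\overline{\mathcal{F}}+\mathbf{z})\neq\emptyset\}$ and $\mathcal{N}\cdot\boldsymbol{\omega}=\{\sum_j z_j\omega_j:\mathbf{z}\in\mathcal{N}\}$. Sums of sets are Minkowski sums, $p_0\Delta=\{p_0\delta:\delta\in\Delta\}$. *)

theory Defs
  imports "HOL-Analysis.Analysis" "HOL-Computational_Algebra.Polynomial"
begin

text \<open>The number field K of degree k is realised inside the complex numbers.
  The order O is given by its Z-basis omega, indexed by a finite type 'k with k = CARD('k);
  the distinguished index i0 plays the role of omega_1 = 1.\<close>

definition lin_comb :: "('k::finite \<Rightarrow> complex) \<Rightarrow> ('k \<Rightarrow> complex) \<Rightarrow> complex" where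
  "lin_comb c \<omega> = (\<Sum>i\<in>UNIV. c i * \<omega> i)"

definition order_set :: "('k::finite \<Rightarrow> complex) \<Rightarrow> complex set" where
  "order_set \<omega> = {lin_comb (\<lambda>i. of_int (z i)) \<omega> | z. True}"

text \<open>omega is a Z-basis (Z-linearly independent) of a subring of C containing 1 = omega i0;
  its Q-span is then a number field of degree k, and the Z-span is an order in it.\<close>
definition is_order_basis :: "('k::finite \<Rightarrow> complex) \<Rightarrow> 'k \<Rightarrow> bool" where
  "is_order_basis \<omega> i0 \<longleftrightarrow>
     \<omega> i0 = 1 \<and>
     (\<forall>z::'k \<Rightarrow> int. lin_comb (\<lambda>i. of_int (z i)) \<omega> = 0 \<longrightarrow> (\<forall>i. z i = 0)) \<and>
     (\<forall>i j. \<omega> i * \<omega> j \<in> order_set \<omega>)"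

definition poly_over :: "complex set \<Rightarrow> complex poly set" where
  "poly_over R = {a. \<forall>i. coeff a i \<in> R}"

definition complete_residue_system :: "complex set \<Rightarrow> complex \<Rightarrow> complex set \<Rightarrow> bool" where
  "complete_residue_system R m D \<longleftrightarrow> D \<subseteq> R \<and>
     (\<forall>a\<in>R. \<exists>!d. d \<in> D \<and> (\<exists>q\<in>R. a - d = m * q))"

definition is_GNS :: "complex set \<Rightarrow> complex poly \<Rightarrow> complex set \<Rightarrow> bool" where
  "is_GNS R p D \<longleftrightarrow> p \<in> poly_over R \<and> lead_coeff p = 1 \<and> 0 \<in> D \<and>
     complete_residue_system R (coeff p 0) D"

definition finiteness_property :: "complex set \<Rightarrow> complex poly \<Rightarrow> complex set \<Rightarrow> bool" where
  "finiteness_property R p D \<longleftrightarrow>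
     (\<forall>a\<in>poly_over R. \<exists>(l::nat) (d::nat \<Rightarrow> complex).
        (\<forall>j<l. d j \<in> D) \<and>
        (\<exists>q\<in>poly_over R. a - (\<Sum>j<l. monom (d j) j) = p * q))"

definition int_vec :: "(real^'k) \<Rightarrow> bool" where
  "int_vec z \<longleftrightarrow> (\<forall>i. z $ i \<in> \<int>)"

definition is_fundamental_domain ::
  "('k::finite \<Rightarrow> complex) \<Rightarrow> complex poly \<Rightarrow> complex set \<Rightarrow> (real^'k) set \<Rightarrow> bool" where
  "is_fundamental_domain \<omega> p D F \<longleftrightarrow>
     bounded F \<and>
     (\<forall>x::real^'k. \<exists>!fz. fst fz \<in> F \<and> int_vec (snd fz) \<and> x = fst fz + snd fz) \<and>
     D = {coeff p 0 * lin_comb (\<lambda>i. of_real (f $ i)) \<omega> | f. f \<in> F} \<inter> order_set \<omega>"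

definition nbr_set :: "(real^'k) set \<Rightarrow> (real^'k) set" where
  "nbr_set F = {z. int_vec z \<and> closure F \<inter> ((\<lambda>x. x + z) ` closure F) \<noteq> {}}"

definition Delta_set :: "('k::finite \<Rightarrow> complex) \<Rightarrow> (real^'k) set \<Rightarrow> complex set" where
  "Delta_set \<omega> F = {lin_comb (\<lambda>i. of_real (z $ i)) \<omega> | z. z \<in> nbr_set F}"

end

theory Submission imports Defs begin


lemma int_vec_subset_closed:
  assumes "S \<subseteq> {z::real^'k. int_vec z}"
  shows "closed S"
proof (rule discrete_imp_closed[of 1], simp, intro ballI impI)
  fix x y :: "real^'k" assume x: "x \<in> S" and y: "y \<in> S" and d: "dist y x < 1"
  show "y = x"
  proof (rule vec_eq_iff[THEN iffD2], rule allI)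
    fix i
    have "\<bar>(y - x)$i\<bar> \<le> norm (y - x)" by (rule component_le_norm_cart)
    also have "\<dots> < 1" using d by (simp add: dist_norm)
    finally have lt: "\<bar>y$i - x$i\<bar> < 1" by simp
    have "y$i \<in> \<int>" "x$i \<in> \<int>" using x y assms by (auto simp: int_vec_def)
    then have "y$i - x$i \<in> \<int>" by (rule Ints_diff)
    then obtain m where m: "y$i - x$i = of_int m" by (auto elim: Ints_cases)
    with lt have "m = 0" by simp
    with m show "y$i = x$i" by simp
  qed
qed

lemma closed_tiles:
  fixes F :: "(real^'k) set"
  assumes "bounded F" "H \<subseteq> {z. int_vec z}"
  shows "closed (\<Union>h\<in>H. \<Union>a\<in>closure F. {h + a})"
  by (rule closed_compact_sums) (use assms int_vec_subset_closed in \<open>auto simp: compact_closure\<close>)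

lemma tiles_generate:
  fixes F :: "(real^'k) set"
  assumes bF: "bounded F"
    and cover: "\<forall>x. \<exists>f z. f \<in> F \<and> int_vec z \<and> x = f + z"
    and H0: "0 \<in> H" and Hint: "H \<subseteq> {z. int_vec z}"
    and Hadd: "\<forall>h\<in>H. \<forall>m\<in>nbr_set F. h + m \<in> H"
    and g: "int_vec g"
  shows "g \<in> H"
proof (rule ccontr)
  assume gH: "g \<notin> H"
  let ?A = "\<Union>h\<in>H. \<Union>a\<in>closure F. {h + a}"
  let ?B = "\<Union>h\<in>{z. int_vec z} - H. \<Union>a\<in>closure F. {h + a}"
  have cA: "closed ?A" by (rule closed_tiles[OF bF Hint])
  have cB: "closed ?B" by (rule closed_tiles[OF bF]) auto
  have cov: "UNIV \<subseteq> ?A \<union> ?B"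
  proof
    fix x :: "real^'k"
    obtain f z where "f \<in> F" "int_vec z" "x = f + z" using cover by blast
    then have "f \<in> closure F" "x = z + f" using closure_subset by (auto simp: add.commute)
    then show "x \<in> ?A \<union> ?B" using \<open>int_vec z\<close> by (cases "z \<in> H") auto
  qed
  have disj: "?A \<inter> ?B = {}"
  proof (rule ccontr)
    assume "?A \<inter> ?B \<noteq> {}"
    then obtain h a h' a' where h: "h \<in> H" and a: "a \<in> closure F" and h': "int_vec h'" "h' \<notin> H"
      and a': "a' \<in> closure F" and eq: "h + a = h' + a'" by auto
    have "h' - h \<in> nbr_set F"
      unfolding nbr_set_def
    proof (intro CollectI conjI)
      show "int_vec (h' - h)" using h' Hint h by (auto simp: int_vec_def)
      have "a = a' + (h' - h)" using eq by (simp add: algebra_simps)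
      then show "closure F \<inter> (\<lambda>x. x + (h' - h)) ` closure F \<noteq> {}" using a a' by auto
    qed
    then have "h + (h' - h) \<in> H" using Hadd h by blast
    then show False using h' by simp
  qed
  have Fne: "closure F \<noteq> {}" using cover closure_subset by blast
  have "?A \<noteq> {}" using H0 Fne by auto
  moreover have "?B \<noteq> {}" using g gH Fne by auto
  ultimately have "\<exists>A B. closed A \<and> closed B \<and> (UNIV::(real^'k) set) \<subseteq> A \<union> B \<and> A \<inter> B \<inter> UNIV = {}
     \<and> A \<inter> UNIV \<noteq> {} \<and> B \<inter> UNIV \<noteq> {}"
    using cA cB cov disj by (intro exI[of _ ?A] exI[of _ ?B]) simp
  then show False using connected_UNIV[where 'a="real^'k"] unfolding connected_closed by (elim notE)
qed




definition Ep :: "complex poly \<Rightarrow> (nat \<Rightarrow> complex) \<Rightarrow> complex poly" where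
  "Ep p \<delta> = (\<Sum>k<degree p. smult (\<delta> k) (poly_shift (Suc k) p))"

definition rep :: "complex set \<Rightarrow> complex poly \<Rightarrow> complex set \<Rightarrow> complex poly \<Rightarrow> bool" where
  "rep R p D b \<longleftrightarrow> (\<exists>(l::nat) (d::nat \<Rightarrow> complex). (\<forall>j<l. d j \<in> D) \<and>
        (\<exists>q\<in>poly_over R. b - (\<Sum>j<l. monom (d j) j) = p * q))"

lemma coeff_Ep: "coeff (Ep p \<delta>) i = (\<Sum>k<degree p. \<delta> k * coeff p (i + Suc k))"
  by (simp add: Ep_def coeff_sum coeff_poly_shift)

lemma Ep_step:
  assumes "degree p > 0"
  shows "Ep p \<delta> = pCons (\<Sum>k<degree p. \<delta> k * coeff p (Suc k))
                   (Ep p (case_nat (-e) \<delta>) + smult e (poly_shift 1 p))"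
proof -
  obtain m where m: "degree p = Suc m" using assms by (cases "degree p") auto
  show ?thesis
  proof (rule poly_eqI)
    fix i show "coeff (Ep p \<delta>) i = coeff (pCons (\<Sum>k<degree p. \<delta> k * coeff p (Suc k))
                   (Ep p (case_nat (-e) \<delta>) + smult e (poly_shift 1 p))) i"
    proof (cases i)
      case 0 then show ?thesis by (simp add: coeff_Ep)
    next
      case (Suc j)
      have z: "coeff p (Suc j + Suc m) = 0" using m by (intro coeff_eq_0) simp
      have L: "(\<Sum>k<Suc m. \<delta> k * coeff p (Suc j + Suc k)) = (\<Sum>k<m. \<delta> k * coeff p (Suc j + Suc k))"
        using z by (simp only: sum.lessThan_Suc) simp
      have R: "(\<Sum>k<Suc m. case_nat (-e) \<delta> k * coeff p (j + Suc k)) =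
          (-e) * coeff p (j + Suc 0) + (\<Sum>k<m. \<delta> k * coeff p (j + Suc (Suc k)))"
        by (simp only: sum.lessThan_Suc_shift) simp
      show ?thesis unfolding Suc
        by (simp only: coeff_pCons_Suc coeff_add coeff_smult coeff_Ep m L R coeff_poly_shift) (simp add: algebra_simps)
    qed
  qed
qed

lemma p_pCons: "p = pCons (coeff p 0) (poly_shift 1 p)"
  by (rule poly_eqI) (simp add: coeff_pCons coeff_poly_shift split: nat.split)

lemma monom_sum_case:
  "(\<Sum>j<Suc l. monom (case_nat a dd j) j) = pCons a (\<Sum>j<l. monom (dd j) j)"
  by (induction l) (simp_all add: monom_Suc monom_0)

lemma monom_sum_Suc:
  "(\<Sum>j<Suc l. monom (d j) j) = pCons (d 0) (\<Sum>j<l. monom (d (Suc j)) j)"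
proof -
  have "d = case_nat (d 0) (\<lambda>j. d (Suc j))" by (auto split: nat.split)
  then have "(\<Sum>j<Suc l. monom (d j) j) = (\<Sum>j<Suc l. monom (case_nat (d 0) (\<lambda>j. d (Suc j)) j) j)"
    by metis
  then show ?thesis by (simp only: monom_sum_case)
qed

lemma rep_step:
  assumes "d' \<in> D" "e \<in> R" "rep R p D t"
  shows "rep R p D (pCons (d' + coeff p 0 * e) (t + smult e (poly_shift 1 p)))"
proof -
  from assms(3) obtain l d q where d: "\<forall>j<l. d j \<in> D" and q: "q \<in> poly_over R"
    and eq: "t - (\<Sum>j<l. monom (d j) j) = p * q" unfolding rep_def by blast
  have sp: "smult e p = pCons (e * coeff p 0) (smult e (poly_shift 1 p))"
    by (subst p_pCons) simp
  have "pCons (d' + coeff p 0 * e) (t + smult e (poly_shift 1 p)) - (\<Sum>j<Suc l. monom (case_nat d' d j) j)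
      = p * pCons e q"
    unfolding monom_sum_case using eq sp by (simp add: algebra_simps)
  moreover have "\<forall>j<Suc l. case_nat d' d j \<in> D" using d assms(1) by (auto split: nat.split)
  moreover have "pCons e q \<in> poly_over R" using q assms(2)
    by (auto simp: poly_over_def coeff_pCons split: nat.split)
  ultimately show ?thesis unfolding rep_def by blast
qed




lemma lin_comb_add: "lin_comb (\<lambda>i. x i + y i) \<omega> = lin_comb x \<omega> + lin_comb y \<omega>"
  by (simp add: lin_comb_def distrib_right sum.distrib)

lemma lin_comb_neg: "lin_comb (\<lambda>i. - x i) \<omega> = - lin_comb x \<omega>"
  by (simp add: lin_comb_def sum_negf)

lemma lin_comb_zero: "lin_comb (\<lambda>i. 0) \<omega> = 0"
  by (simp add: lin_comb_def)

lemma Ints_floor_eq: "(x::real) \<in> \<int> \<Longrightarrow> of_int \<lfloor>x\<rfloor> = x"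
  by (metis Ints_cases floor_of_int)

locale ctx =
  fixes \<omega> :: "'k::finite \<Rightarrow> complex" and i0 :: 'k
    and p :: "complex poly" and D :: "complex set" and F :: "(real^'k) set"
  assumes basis: "is_order_basis \<omega> i0"
    and gns: "is_GNS (order_set \<omega>) p D"
    and fd: "is_fundamental_domain \<omega> p D F"
    and i: "{z + d | z d. z \<in> {\<Sum>j\<in>{1..degree p}. \<delta> j * coeff p j | \<delta>. \<forall>j. \<delta> j \<in> Delta_set \<omega> F}
                        \<and> d \<in> D}
            \<subseteq> {d + coeff p 0 * e | d e. d \<in> D \<and> e \<in> Delta_set \<omega> F}"
    and ii: "{\<Sum>j\<in>{1..degree p}. \<delta> j * coeff p j | \<delta>. \<forall>j. \<delta> j \<in> Delta_set \<omega> F}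
            \<subseteq> D \<union> {d - coeff p 0 | d. d \<in> D}"
    and iii: "\<forall>J \<subseteq> {1..degree p}. (\<Sum>j\<in>J. coeff p j) \<in> D"
    and npos: "degree p > 0"
begin

abbreviation "Ord \<equiv> order_set \<omega>"
abbreviation "\<Delta> \<equiv> Delta_set \<omega> F"
abbreviation "n \<equiv> degree p"
abbreviation "Zs \<equiv> {\<Sum>j\<in>{1..degree p}. \<delta> j * coeff p j | \<delta>. \<forall>j. \<delta> j \<in> Delta_set \<omega> F}"

lemma O_add: "a \<in> Ord \<Longrightarrow> b \<in> Ord \<Longrightarrow> a + b \<in> Ord"
proof -
  assume "a \<in> Ord" "b \<in> Ord"
  then obtain x y where "a = lin_comb (\<lambda>i. of_int (x i)) \<omega>" "b = lin_comb (\<lambda>i. of_int (y i)) \<omega>"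
    by (auto simp: order_set_def)
  then have "a + b = lin_comb (\<lambda>i. of_int (x i + y i)) \<omega>" by (simp only: of_int_add lin_comb_add)
  then show ?thesis unfolding order_set_def by (intro CollectI exI[of _ "\<lambda>i. x i + y i"]) simp
qed

lemma O_0: "0 \<in> Ord"
  using lin_comb_zero[of \<omega>] by (auto simp: order_set_def intro!: exI[of _ "\<lambda>i. 0"])

lemma O_1: "1 \<in> Ord"
proof -
  have e: "(\<lambda>i. of_int (if i = i0 then 1 else 0) * \<omega> i) = (\<lambda>i. if i = i0 then \<omega> i else 0)"
    by auto
  have "lin_comb (\<lambda>i. of_int (if i = i0 then 1 else 0)) \<omega> = \<omega> i0"
    unfolding lin_comb_def e by simp
  then show ?thesis using basis unfolding is_order_basis_def order_set_def by force
qed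

lemma D_O: "D \<subseteq> Ord" and D0: "0 \<in> D"
  using gns by (auto simp: is_GNS_def complete_residue_system_def)

lemma D_unique: "a \<in> Ord \<Longrightarrow> d1 \<in> D \<Longrightarrow> d2 \<in> D \<Longrightarrow> q1 \<in> Ord \<Longrightarrow> q2 \<in> Ord
   \<Longrightarrow> a - d1 = coeff p 0 * q1 \<Longrightarrow> a - d2 = coeff p 0 * q2 \<Longrightarrow> d1 = d2"
  using gns unfolding is_GNS_def complete_residue_system_def by blast

lemma Fne: "F \<noteq> {}"
  using fd unfolding is_fundamental_domain_def by blast

lemma N0: "0 \<in> nbr_set F"
  using Fne closure_subset by (auto simp: nbr_set_def int_vec_def)

lemma Delta0: "0 \<in> \<Delta>"
  using N0 unfolding Delta_set_def by (force simp: lin_comb_zero)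

lemma Delta_neg: "x \<in> \<Delta> \<Longrightarrow> -x \<in> \<Delta>"
proof -
  assume "x \<in> \<Delta>"
  then obtain z where z: "z \<in> nbr_set F" and x: "x = lin_comb (\<lambda>i. of_real (z$i)) \<omega>"
    by (auto simp: Delta_set_def)
  have "-z \<in> nbr_set F"
  proof -
    from z obtain a b where a: "a \<in> closure F" "b \<in> closure F" "a = b + z" and iv: "int_vec z"
      by (auto simp: nbr_set_def)
    have "b \<in> closure F \<inter> (\<lambda>x. x + (-z)) ` closure F"
      by (rule IntI, fact, rule image_eqI[of _ _ a]) (use a in auto)
    moreover have "int_vec (-z)" using iv by (auto simp: int_vec_def)
    ultimately show ?thesis unfolding nbr_set_def by blast
  qed
  moreover have "-x = lin_comb (\<lambda>i. of_real ((-z)$i)) \<omega>" using x by (simp add: lin_comb_neg)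
  ultimately show ?thesis unfolding Delta_set_def by blast
qed

lemma Delta_O: "x \<in> \<Delta> \<Longrightarrow> x \<in> Ord"
proof -
  assume "x \<in> \<Delta>"
  then obtain z where z: "int_vec z" and x: "x = lin_comb (\<lambda>i. of_real (z$i)) \<omega>"
    by (auto simp: Delta_set_def nbr_set_def)
  have "(\<lambda>i. of_real (z$i) :: complex) = (\<lambda>i. of_int \<lfloor>z$i\<rfloor>)"
  proof
    fix i have "z$i \<in> \<int>" using z by (simp add: int_vec_def)
    then have "of_int \<lfloor>z$i\<rfloor> = z$i" by (rule Ints_floor_eq)
    then show "(of_real (z$i) :: complex) = of_int \<lfloor>z$i\<rfloor>"
      by (metis of_real_of_int_eq)
  qed
  then show ?thesis using x by (auto simp: order_set_def)
qed

lemma one_D: "1 \<in> D"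
proof -
  have "{n} \<subseteq> {1..n}" using npos by auto
  then have "(\<Sum>j\<in>{n}. coeff p j) \<in> D" using iii by blast
  moreover have "coeff p n = 1" using gns by (simp add: is_GNS_def)
  ultimately show ?thesis by simp
qed

lemma p0_nz: "coeff p 0 \<noteq> 0"
proof
  assume "coeff p 0 = 0"
  then have "D \<subseteq> {0}" using fd unfolding is_fundamental_domain_def by auto
  then show False using one_D by auto
qed

lemma zmem: "(\<forall>k. \<delta> k \<in> \<Delta>) \<Longrightarrow> (\<Sum>k<n. \<delta> k * coeff p (Suc k)) \<in> Zs"
proof -
  assume d: "\<forall>k. \<delta> k \<in> \<Delta>"
  have "(\<Sum>j\<in>{1..n}. \<delta> (j - 1) * coeff p j) = (\<Sum>j\<in>Suc ` {..<n}. \<delta> (j - 1) * coeff p j)"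
    by (simp add: image_Suc_lessThan)
  also have "\<dots> = (\<Sum>k<n. \<delta> k * coeff p (Suc k))" by (subst sum.reindex) auto
  finally show ?thesis using d by (intro CollectI exI[of _ "\<lambda>j. \<delta> (j - 1)"]) auto
qed

lemma zD: "(\<forall>k<n. \<delta> k \<in> {0,1}) \<Longrightarrow> (\<Sum>k<n. \<delta> k * coeff p (Suc k)) \<in> D"
proof -
  assume d: "\<forall>k<n. \<delta> k \<in> {0,1}"
  let ?K = "{k \<in> {..<n}. \<delta> k = 1}"
  have sub: "Suc ` ?K \<subseteq> {1..n}" by auto
  have mem: "(\<Sum>j\<in>Suc ` ?K. coeff p j) \<in> D" using iii sub by blast
  have "(\<Sum>j\<in>Suc ` ?K. coeff p j) = (\<Sum>k\<in>?K. coeff p (Suc k))" by (subst sum.reindex) auto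
  also have "\<dots> = (\<Sum>k<n. if \<delta> k = 1 then coeff p (Suc k) else 0)" by (rule sum.inter_filter) simp
  also have "\<dots> = (\<Sum>k<n. \<delta> k * coeff p (Suc k))"
    by (rule sum.cong) (use d in auto)
  finally show ?thesis using mem by simp
qed

lemma rep_Ep_step:
  assumes "rep Ord p D (Ep p (case_nat (-e) \<delta>))" "(\<Sum>k<n. \<delta> k * coeff p (Suc k)) = d' + coeff p 0 * e"
    "d' \<in> D" "e \<in> Ord"
  shows "rep Ord p D (Ep p \<delta>)"
  using rep_step[OF assms(3,4,1)] assms(2) Ep_step[OF npos, of \<delta> e] by simp

lemma rep0: "rep Ord p D 0"
  unfolding rep_def using O_0 by (auto intro!: exI[of _ 0] bexI[of _ 0] simp: poly_over_def)

lemma phase2: "\<forall>\<delta>. (\<forall>k<n. \<delta> k \<in> {0,1}) \<longrightarrow> (\<forall>k<n-j. \<delta> k = 0) \<longrightarrow> rep Ord p D (Ep p \<delta>)"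
proof (induction j)
  case 0
  show ?case
  proof (intro allI impI)
    fix \<delta> :: "nat \<Rightarrow> complex" assume "\<forall>k<n-0. \<delta> k = 0"
    then have "Ep p \<delta> = 0" by (simp add: Ep_def)
    then show "rep Ord p D (Ep p \<delta>)" using rep0 by simp
  qed
next
  case (Suc j)
  show ?case
  proof (intro allI impI)
    fix \<delta> :: "nat \<Rightarrow> complex" assume a: "\<forall>k<n. \<delta> k \<in> {0,1}" and b: "\<forall>k<n - Suc j. \<delta> k = 0"
    let ?d = "case_nat (-0) \<delta>"
    have h1: "\<forall>k<n. ?d k \<in> {0,1}" using a by (auto split: nat.split)
    have h2: "\<forall>k<n-j. ?d k = 0" using b by (auto split: nat.split)
    have "rep Ord p D (Ep p ?d)" using mp[OF mp[OF Suc.IH[THEN spec[of _ ?d]] h1] h2] .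
    moreover have "(\<Sum>k<n. \<delta> k * coeff p (Suc k)) \<in> D" using zD a by blast
    ultimately show "rep Ord p D (Ep p \<delta>)" using rep_Ep_step[of 0 \<delta>] O_0 by simp
  qed
qed

lemma one_Delta_if: "z \<in> Zs \<Longrightarrow> d \<in> D \<Longrightarrow> z = d - coeff p 0 \<Longrightarrow> 1 \<in> \<Delta>"
proof -
  assume z: "z \<in> Zs" and d: "d \<in> D" and zd: "z = d - coeff p 0"
  have "z + 0 \<in> {z + d | z d. z \<in> Zs \<and> d \<in> D}"
    using z D0 by (intro CollectI exI[of _ z] exI[of _ 0]) simp
  then have "z + 0 \<in> {d + coeff p 0 * e | d e. d \<in> D \<and> e \<in> \<Delta>}" by (rule subsetD[OF i])
  then obtain d'' e where d'': "d'' \<in> D" and e: "e \<in> \<Delta>" and eq: "z + 0 = d'' + coeff p 0 * e"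
    by blast
  have dO: "d \<in> Ord" using d D_O by auto
  have "1 + e \<in> Ord" using O_add O_1 Delta_O e by blast
  moreover have "d - d'' = coeff p 0 * (1 + e)" using eq zd by (simp add: algebra_simps)
  moreover have "d - d = coeff p 0 * 0" by simp
  ultimately have "d = d''" using D_unique[OF dO d d'' O_0] by blast
  then have "coeff p 0 * (1 + e) = 0" using eq zd by (simp add: algebra_simps)
  then have "e = -1" using p0_nz by (simp add: add_eq_0_iff)
  then show ?thesis using Delta_neg[OF e] by simp
qed

lemma phase1: "\<forall>\<delta>. (\<forall>k. \<delta> k \<in> \<Delta>) \<longrightarrow> (\<forall>k<n-j. \<delta> k \<in> {0,1}) \<longrightarrow> rep Ord p D (Ep p \<delta>)"
proof (induction j)
  case 0
  then show ?case using phase2[of n] by auto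
next
  case (Suc j)
  show ?case
  proof (intro allI impI)
    fix \<delta> :: "nat \<Rightarrow> complex" assume a: "\<forall>k. \<delta> k \<in> \<Delta>" and b: "\<forall>k<n - Suc j. \<delta> k \<in> {0,1}"
    let ?z = "\<Sum>k<n. \<delta> k * coeff p (Suc k)"
    have zZ: "?z \<in> Zs" using zmem a by blast
    then have "?z \<in> D \<union> {d - coeff p 0 | d. d \<in> D}" by (rule subsetD[OF ii])
    then have "?z \<in> D \<or> (\<exists>d\<in>D. ?z = d - coeff p 0)" by blast
    then obtain d' e where d': "d' \<in> D" and eq: "?z = d' + coeff p 0 * e" and
      e: "e \<in> {0, -1}" and eD: "-e \<in> \<Delta>"
    proof
      assume "?z \<in> D" then show ?thesis using that[of ?z 0] Delta0 by simp
    next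
      assume "\<exists>d\<in>D. ?z = d - coeff p 0"
      then obtain d where "d \<in> D" "?z = d - coeff p 0" by blast
      moreover then have "1 \<in> \<Delta>" using one_Delta_if zZ by blast
      ultimately show ?thesis using that[of d "-1"] by simp
    qed
    let ?d = "case_nat (-e) \<delta>"
    have h1: "\<forall>k. ?d k \<in> \<Delta>" using a eD by (auto split: nat.split)
    have h2: "\<forall>k<n-j. ?d k \<in> {0,1}" using b e by (auto split: nat.split)
    have "rep Ord p D (Ep p ?d)" using mp[OF mp[OF Suc.IH[THEN spec[of _ ?d]] h1] h2] .
    moreover have "e \<in> Ord"
    proof (cases "e = 0")
      case True then show ?thesis using O_0 by simp
    next
      case False then have "e = - (- e)" by simp
      then show ?thesis using Delta_neg[OF eD] Delta_O by metis
    qed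
    ultimately show "rep Ord p D (Ep p \<delta>)" using rep_Ep_step[of e \<delta> d'] eq d' by simp
  qed
qed

lemma lemmaB: "\<forall>k. \<delta> k \<in> \<Delta> \<Longrightarrow> rep Ord p D (Ep p \<delta>)"
  using phase1[of n] by simp

end



context ctx begin

lemma rep_add_pq: "rep Ord p D X \<Longrightarrow> q \<in> poly_over Ord \<Longrightarrow> rep Ord p D (X + p * q)"
proof -
  assume "rep Ord p D X" and q: "q \<in> poly_over Ord"
  then obtain l d q' where d: "\<forall>j<l. d j \<in> D" and q': "q' \<in> poly_over Ord"
    and eq: "X - (\<Sum>j<l. monom (d j) j) = p * q'" unfolding rep_def by blast
  have "X + p * q - (\<Sum>j<l. monom (d j) j) = p * (q' + q)" using eq by (simp add: algebra_simps)
  moreover have "q' + q \<in> poly_over Ord" using q q' O_add by (simp add: poly_over_def)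
  ultimately show ?thesis using d unfolding rep_def by blast
qed

lemma lemmaA: "\<forall>d \<delta>. (\<forall>j<l. d j \<in> D) \<longrightarrow> (\<forall>k. \<delta> k \<in> \<Delta>) \<longrightarrow>
     rep Ord p D ((\<Sum>j<l. monom (d j) j) + Ep p \<delta>)"
proof (induction l)
  case 0 then show ?case using lemmaB by simp
next
  case (Suc m)
  show ?case
  proof (intro allI impI)
    fix d \<delta> :: "nat \<Rightarrow> complex" assume d: "\<forall>j<Suc m. d j \<in> D" and a: "\<forall>k. \<delta> k \<in> \<Delta>"
    let ?z = "\<Sum>k<n. \<delta> k * coeff p (Suc k)"
    have "?z + d 0 \<in> {z + d | z d. z \<in> Zs \<and> d \<in> D}"
      using zmem[OF a] d by (intro CollectI exI[of _ ?z] exI[of _ "d 0"]) simp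
    then have "?z + d 0 \<in> {d + coeff p 0 * e | d e. d \<in> D \<and> e \<in> \<Delta>}" by (rule subsetD[OF i])
    then obtain d' e where d': "d' \<in> D" and e: "e \<in> \<Delta>" and eq: "?z + d 0 = d' + coeff p 0 * e"
      by blast
    let ?d = "case_nat (-e) \<delta>"
    have h1: "\<forall>k. ?d k \<in> \<Delta>" using a Delta_neg[OF e] by (auto split: nat.split)
    have h2: "\<forall>j<m. d (Suc j) \<in> D" using d by auto
    have r: "rep Ord p D ((\<Sum>j<m. monom (d (Suc j)) j) + Ep p ?d)"
      using mp[OF mp[OF Suc.IH[THEN spec[of _ "\<lambda>j. d (Suc j)"], THEN spec[of _ ?d]] h2] h1] .
    have "(\<Sum>j<Suc m. monom (d j) j) + Ep p \<delta> =
       pCons (d' + coeff p 0 * e) (((\<Sum>j<m. monom (d (Suc j)) j) + Ep p ?d) + smult e (poly_shift 1 p))"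
      unfolding monom_sum_Suc Ep_step[OF npos, of \<delta> e] using eq by (simp add: algebra_simps)
    then show "rep Ord p D ((\<Sum>j<Suc m. monom (d j) j) + Ep p \<delta>)"
      using rep_step[OF d' Delta_O[OF e] r] by simp
  qed
qed

definition "Gs = {g. \<forall>b. rep Ord p D b \<longrightarrow> rep Ord p D (b + g)}"

lemma Ep_G: "\<forall>k. \<delta> k \<in> \<Delta> \<Longrightarrow> Ep p \<delta> \<in> Gs"
proof -
  assume a: "\<forall>k. \<delta> k \<in> \<Delta>"
  { fix b assume "rep Ord p D b"
    then obtain l d q where d: "\<forall>j<l. d j \<in> D" and q: "q \<in> poly_over Ord"
      and eq: "b - (\<Sum>j<l. monom (d j) j) = p * q" unfolding rep_def by blast
    have "rep Ord p D ((\<Sum>j<l. monom (d j) j) + Ep p \<delta> + p * q)"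
      using lemmaA[of l] d a rep_add_pq q by blast
    moreover have "b + Ep p \<delta> = (\<Sum>j<l. monom (d j) j) + Ep p \<delta> + p * q"
      using eq by (simp add: algebra_simps)
    ultimately have "rep Ord p D (b + Ep p \<delta>)" by (simp add: ac_simps) }
  then show ?thesis unfolding Gs_def by blast
qed

lemma G_add: "g \<in> Gs \<Longrightarrow> h \<in> Gs \<Longrightarrow> g + h \<in> Gs"
proof -
  assume g: "g \<in> Gs" and h: "h \<in> Gs"
  { fix b assume "rep Ord p D b"
    then have "rep Ord p D (b + g)" using g unfolding Gs_def by blast
    then have "rep Ord p D (b + g + h)" using h unfolding Gs_def by blast
    then have "rep Ord p D (b + (g + h))" by (simp add: add.assoc) }
  then show ?thesis unfolding Gs_def by blast
qed

lemma G_0: "0 \<in> Gs" unfolding Gs_def by simp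

lemma rep_pCons: "rep Ord p D t \<Longrightarrow> d' \<in> D \<Longrightarrow> rep Ord p D (pCons d' t)"
  using rep_step[of d' D 0 Ord p t] O_0 by simp

lemma G_x: "g \<in> Gs \<Longrightarrow> pCons 0 g \<in> Gs"
proof -
  assume g: "g \<in> Gs"
  { fix b assume "rep Ord p D b"
    then obtain l d q where d: "\<forall>j<l. d j \<in> D" and q: "q \<in> poly_over Ord"
      and eq: "b - (\<Sum>j<l. monom (d j) j) = p * q" unfolding rep_def by blast
    define dd where "dd = (\<lambda>j. if j < l then d j else 0)"
    have ddD: "\<forall>j. dd j \<in> D" using d D0 by (simp add: dd_def)
    have "(\<Sum>j<Suc l. monom (dd j) j) = (\<Sum>j<l. monom (d j) j)"
      by (simp add: dd_def)
    then have S: "(\<Sum>j<l. monom (d j) j) = pCons (dd 0) (\<Sum>j<l. monom (dd (Suc j)) j)"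
      by (simp only: monom_sum_Suc)
    have "rep Ord p D (\<Sum>j<l. monom (dd (Suc j)) j)"
      unfolding rep_def using ddD O_0
      by (intro exI[of _ l] exI[of _ "\<lambda>j. dd (Suc j)"] conjI bexI[of _ 0]) (auto simp: poly_over_def)
    then have "rep Ord p D ((\<Sum>j<l. monom (dd (Suc j)) j) + g)" using g unfolding Gs_def by blast
    then have "rep Ord p D (pCons (dd 0) ((\<Sum>j<l. monom (dd (Suc j)) j) + g) + p * q)"
      using rep_pCons ddD rep_add_pq q by blast
    moreover have "b + pCons 0 g = pCons (dd 0) ((\<Sum>j<l. monom (dd (Suc j)) j) + g) + p * q"
      using eq S by (simp add: algebra_simps)
    ultimately have "rep Ord p D (b + pCons 0 g)" by simp }
  then show ?thesis unfolding Gs_def by blast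
qed

lemma shift_n: "poly_shift n p = 1"
proof (rule poly_eqI)
  fix i
  have lc: "coeff p n = 1" using gns by (simp add: is_GNS_def)
  show "coeff (poly_shift n p) i = coeff 1 i"
    using lc by (cases i) (auto simp: coeff_poly_shift coeff_eq_0)
qed

lemma const_Delta_G: "c \<in> \<Delta> \<Longrightarrow> [:c:] \<in> Gs"
proof -
  assume c: "c \<in> \<Delta>"
  let ?d = "\<lambda>k. if k = n - 1 then c else 0"
  have "\<forall>k. ?d k \<in> \<Delta>" using c Delta0 by auto
  then have "Ep p ?d \<in> Gs" by (rule Ep_G)
  moreover have "Ep p ?d = [:c:]"
  proof -
    have "Ep p ?d = (\<Sum>k<n. if k = n - 1 then smult c (poly_shift (Suc k) p) else 0)"
      unfolding Ep_def by (rule sum.cong) auto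
    also have "\<dots> = smult c (poly_shift n p)" using npos by (simp add: sum.delta')
    finally show ?thesis by (simp add: shift_n)
  qed
  ultimately show ?thesis by simp
qed

lemma const_O_G: "c \<in> Ord \<Longrightarrow> [:c:] \<in> Gs"
proof -
  assume "c \<in> Ord"
  then obtain z where c: "c = lin_comb (\<lambda>i. of_int (z i)) \<omega>" by (auto simp: order_set_def)
  let ?H = "{v::real^'k. int_vec v \<and> [:lin_comb (\<lambda>i. of_real (v$i)) \<omega>:] \<in> Gs}"
  let ?v = "\<chi> i. (of_int (z i) :: real)"
  have "?v \<in> ?H"
  proof (rule tiles_generate[of F])
    show "bounded F" using fd by (simp add: is_fundamental_domain_def)
    show "\<forall>x. \<exists>f z. f \<in> F \<and> int_vec z \<and> x = f + z"
      using fd unfolding is_fundamental_domain_def by (metis (no_types, lifting) prod.collapse)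
    show "0 \<in> ?H" using G_0 by (simp add: int_vec_def lin_comb_zero)
    show "?H \<subseteq> {z. int_vec z}" by blast
    show "int_vec ?v" by (simp add: int_vec_def)
    show "\<forall>h\<in>?H. \<forall>m\<in>nbr_set F. h + m \<in> ?H"
    proof (intro ballI)
      fix h m assume h: "h \<in> ?H" and m: "m \<in> nbr_set F"
      have "lin_comb (\<lambda>i. of_real (m$i)) \<omega> \<in> \<Delta>" using m unfolding Delta_set_def by blast
      then have "[:lin_comb (\<lambda>i. of_real (m$i)) \<omega>:] \<in> Gs" by (rule const_Delta_G)
      then have "[:lin_comb (\<lambda>i. of_real (h$i)) \<omega>:] + [:lin_comb (\<lambda>i. of_real (m$i)) \<omega>:] \<in> Gs"
        using h G_add by blast
      moreover have "[:lin_comb (\<lambda>i. of_real ((h+m)$i)) \<omega>:] =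
          [:lin_comb (\<lambda>i. of_real (h$i)) \<omega>:] + [:lin_comb (\<lambda>i. of_real (m$i)) \<omega>:]"
        by (simp add: lin_comb_add[symmetric])
      moreover have "int_vec (h + m)" using h m
        by (auto simp: int_vec_def nbr_set_def intro: Ints_add)
      ultimately show "h + m \<in> ?H" by simp
    qed
  qed
  then show ?thesis using c by simp
qed

lemma all_G: "a \<in> poly_over Ord \<Longrightarrow> a \<in> Gs"
proof (induction a)
  case 0 then show ?case using G_0 by simp
next
  case (pCons a q)
  have all: "\<forall>i. coeff (pCons a q) i \<in> Ord" using pCons.prems unfolding poly_over_def by simp
  have a: "a \<in> Ord" using all[rule_format, of 0] by simp
  have "\<forall>i. coeff q i \<in> Ord"
  proof
    fix i show "coeff q i \<in> Ord" using all[rule_format, of "Suc i"] by simp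
  qed
  then have "q \<in> poly_over Ord" unfolding poly_over_def by simp
  then have "pCons 0 q \<in> Gs" using pCons.IH G_x by blast
  moreover have "[:a:] \<in> Gs" using const_O_G a by blast
  ultimately have "[:a:] + pCons 0 q \<in> Gs" using G_add by blast
  then show ?case by simp
qed

lemma fp: "finiteness_property Ord p D"
proof -
  { fix a assume "a \<in> poly_over Ord"
    then have "a \<in> Gs" by (rule all_G)
    then have "rep Ord p D (0 + a)" using rep0 unfolding Gs_def by blast
    then have "rep Ord p D a" by simp }
  then show ?thesis unfolding finiteness_property_def rep_def by blast
qed

end

theorem mainTheorem8:
  fixes \<omega> :: "'k::finite \<Rightarrow> complex" and i0 :: 'k
    and p :: "complex poly" and D :: "complex set" and F :: "(real^'k) set"
  assumes basis: "is_order_basis \<omega> i0"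
    and gns: "is_GNS (order_set \<omega>) p D"
    and fd: "is_fundamental_domain \<omega> p D F"
    and i: "{z + d | z d. z \<in> {\<Sum>j\<in>{1..degree p}. \<delta> j * coeff p j | \<delta>. \<forall>j. \<delta> j \<in> Delta_set \<omega> F}
                        \<and> d \<in> D}
            \<subseteq> {d + coeff p 0 * e | d e. d \<in> D \<and> e \<in> Delta_set \<omega> F}"
    and ii: "{\<Sum>j\<in>{1..degree p}. \<delta> j * coeff p j | \<delta>. \<forall>j. \<delta> j \<in> Delta_set \<omega> F}
            \<subseteq> D \<union> {d - coeff p 0 | d. d \<in> D}"
    and iii: "\<forall>J \<subseteq> {1..degree p}. (\<Sum>j\<in>J. coeff p j) \<in> D"
  shows "finiteness_property (order_set \<omega>) p D"
proof (cases "degree p = 0")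
  case False
  then interpret ctx \<omega> i0 p D F using assms by unfold_locales auto
  show ?thesis by (rule fp)
next
  case True
  have "coeff p 0 = 1" using gns True by (simp add: is_GNS_def)
  then have p1: "p = 1" using True by (metis degree_0_id one_pCons)
  show ?thesis unfolding finiteness_property_def
  proof
    fix a assume a: "a \<in> poly_over (order_set \<omega>)"
    have "a - (\<Sum>j<0. monom (undefined j) j) = p * a" using p1 by simp
    then show "\<exists>(l::nat) (d::nat \<Rightarrow> complex). (\<forall>j<l. d j \<in> D) \<and>
        (\<exists>q\<in>poly_over (order_set \<omega>). a - (\<Sum>j<l. monom (d j) j) = p * q)"
      using a by blast
  qed
qed


end
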